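(* Let $\beta\colon[0,\infty)\to(0,1)$ be continuous with $\beta^*:=\sup_{t\ge0}\beta(t)<1$, and let $D$ be the multistable subordinator with index $\beta$ (defined in the context). Then the process $D$ is continuous in probability. Moreover, for every $\varepsilon>0$ there exists a constant $C_\varepsilon>0$ such that \[ \mathbb{P}\bigl(D(t+h)-D(t)>\varepsilon\bigr)\le C_\varepsilon h\qquad\text{for all } t,h\in[0,\infty). \]
   Context: Let $\beta\colon[0,\infty)\to(0,1)$ be a continuous function. Let $\Pi=\{(t_i,x_i)\}$ be a Poisson point process on $[0,\infty)\times(0,\infty)$ with intensity measure $\nu(dt,dx)=\beta(t)x^{-\beta(t)-1}\,dt\,dx$. The multistable subordinator with index $\beta$ is the process $D(t)=\sum_{(t_i,x_i)\in\Pi,\ t_i\le t}x_i$, $t\ge0$ (this sum is a.s. finite since $\int_0^t(1-\beta(s))^{-1}ds<\infty$). *)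

theory Defs
  imports "HOL-Probability.Probability"
begin

definition multistable_intensity :: "(real \<Rightarrow> real) \<Rightarrow> (real \<times> real) measure" where
  "multistable_intensity \<beta> =
     density lborel (\<lambda>(t, x). if 0 \<le> t \<and> 0 < x
                               then ennreal (\<beta> t * x powr (- \<beta> t - 1)) else 0)"

definition point_count :: "('w \<Rightarrow> 'p set) \<Rightarrow> 'p set \<Rightarrow> 'w \<Rightarrow> nat" where
  "point_count P A \<omega> = card (P \<omega> \<inter> A)"

definition poisson_point_process ::
    "'w measure \<Rightarrow> ('p::topological_space) measure \<Rightarrow> ('w \<Rightarrow> 'p set) \<Rightarrow> bool" where
  "poisson_point_process M \<nu> P \<longleftrightarrow>
     prob_space M \<and> sets \<nu> = sets borel \<and>
     (\<forall>\<omega>\<in>space M. countable (P \<omega>)) \<and>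
     (\<forall>A\<in>sets borel. emeasure \<nu> A < \<infinity> \<longrightarrow>
        point_count P A \<in> measurable M (count_space UNIV) \<and>
        {\<omega>\<in>space M. finite (P \<omega> \<inter> A)} \<in> sets M \<and>
        (AE \<omega> in M. finite (P \<omega> \<inter> A)) \<and>
        (\<forall>k::nat. measure M {\<omega>\<in>space M. finite (P \<omega> \<inter> A) \<and> point_count P A \<omega> = k}
                  = measure \<nu> A ^ k / fact k * exp (- measure \<nu> A))) \<and>
     (\<forall>(I::nat set) A. finite I \<longrightarrow> (\<forall>i\<in>I. A i \<in> sets borel \<and> emeasure \<nu> (A i) < \<infinity>) \<longrightarrow>
        disjoint_family_on A I \<longrightarrow>
        prob_space.indep_vars M (\<lambda>_. count_space UNIV) (\<lambda>i. point_count P (A i)) I)"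

text \<open>The multistable subordinator D(t) = sum of x_i over points (t_i,x_i) with t_i <= t.
  (The sum is a.s. finite; infsum is 0 on the null set where it is not summable.)\<close>
definition multistable_subordinator :: "('w \<Rightarrow> (real \<times> real) set) \<Rightarrow> real \<Rightarrow> 'w \<Rightarrow> real" where
  "multistable_subordinator P t \<omega> = (\<Sum>\<^sub>\<infinity>p\<in>{p\<in>P \<omega>. fst p \<le> t}. snd p)"

end

theory Submission
  imports Defs
begin

lemma nu_meas:
  fixes \<beta> :: "real \<Rightarrow> real"
  assumes cont: "continuous_on {0..} \<beta>"
  shows "(\<lambda>(t, x). if 0 \<le> t \<and> 0 < x then ennreal (\<beta> t * x powr (- \<beta> t - 1)) else 0)
          \<in> borel_measurable (borel :: (real \<times> real) measure)"
proof -
  define g where "g t = (if t \<in> {0::real..} then \<beta> t else 0)" for t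
  have gm[measurable]: "g \<in> borel_measurable borel"
    unfolding g_def
    by (rule borel_measurable_continuous_on_if) (auto intro: cont continuous_on_const)
  have "(\<lambda>(t, x). if 0 \<le> t \<and> 0 < x then ennreal (\<beta> t * x powr (- \<beta> t - 1)) else 0) =
        (\<lambda>(t, x). if 0 \<le> t \<and> 0 < x then ennreal (g t * x powr (- g t - 1)) else (0::ennreal))"
    by (auto simp: g_def fun_eq_iff)
  also have "\<dots> \<in> borel_measurable (borel \<Otimes>\<^sub>M borel)"
    by measurable
  also have "borel \<Otimes>\<^sub>M borel = (borel :: (real \<times> real) measure)"
    by (rule borel_prod)
  finally show ?thesis .
qed

lemma inner_int:
  fixes b a :: real
  assumes "0 < b" "0 < a"
  shows "(\<integral>\<^sup>+x. ennreal (b * x powr (- b - 1)) * indicator {a..} x \<partial>lborel) = ennreal (a powr (- b))"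
proof -
  have "(\<integral>\<^sup>+x. ennreal (b * x powr (- b - 1)) * indicator {a..} x \<partial>lborel) = ennreal (0 - (- (a powr (- b))))"
  proof (rule nn_integral_FTC_atLeast)
    show "(\<lambda>x. b * x powr (- b - 1)) \<in> borel_measurable borel" by measurable
    fix x assume x: "a \<le> x"
    then have "0 < x" using assms by simp
    show "DERIV (\<lambda>x. - (x powr (- b))) x :> b * x powr (- b - 1)"
      using \<open>0 < x\<close> by (auto intro!: derivative_eq_intros simp: algebra_simps)
    show "0 \<le> b * x powr (- b - 1)" using assms by simp
  next
    have "((\<lambda>x. x powr (- b)) \<longlongrightarrow> 0) at_top"
      by (rule tendsto_neg_powr) (use assms in \<open>auto intro: filterlim_ident\<close>)
    from tendsto_minus[OF this] show "((\<lambda>x. - (x powr (- b))) \<longlongrightarrow> 0) at_top"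
      by simp
  qed
  then show ?thesis by simp
qed

lemma Times_borel:
  fixes A B :: "real set"
  assumes "A \<in> sets borel" "B \<in> sets borel"
  shows "A \<times> B \<in> sets (borel :: (real \<times> real) measure)"
proof -
  have "A \<times> B \<in> sets (borel \<Otimes>\<^sub>M borel)" using assms by (rule pair_measureI)
  then show ?thesis by (simp only: borel_prod)
qed

lemma nu_strip:
  fixes \<beta> :: "real \<Rightarrow> real"
  assumes cont: "continuous_on {0..} \<beta>"
    and pos: "\<And>t. 0 \<le> t \<Longrightarrow> 0 < \<beta> t"
    and le: "\<And>t. 0 \<le> t \<Longrightarrow> \<beta> t \<le> B"
    and a: "0 < a" and h: "0 \<le> h"
  shows "emeasure (multistable_intensity \<beta>) ({s<..s+h} \<times> {a<..}) \<le> ennreal (h * (1 + a powr (- B)))"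
proof -
  define f where "f = (\<lambda>(t, x). if 0 \<le> t \<and> 0 < x then ennreal (\<beta> t * x powr (- \<beta> t - 1)) else 0)"
  have fm: "f \<in> borel_measurable borel" unfolding f_def by (rule nu_meas[OF cont])
  have fm2: "f \<in> borel_measurable (lborel \<Otimes>\<^sub>M lborel)"
    using fm by (simp add: lborel_prod)
  let ?A = "{s<..s+h} \<times> {a<..}"
  have Am: "?A \<in> sets borel" by (rule Times_borel) auto
  have "emeasure (multistable_intensity \<beta>) ?A = (\<integral>\<^sup>+p. f p * indicator ?A p \<partial>lborel)"
    unfolding multistable_intensity_def f_def[symmetric]
    by (rule emeasure_density) (use fm Am in auto)
  also have "\<dots> = (\<integral>\<^sup>+p. f p * indicator ?A p \<partial>(lborel \<Otimes>\<^sub>M lborel))"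
    by (simp add: lborel_prod)
  also have "\<dots> = (\<integral>\<^sup>+t. \<integral>\<^sup>+x. f (t, x) * indicator ?A (t, x) \<partial>lborel \<partial>lborel)"
    by (rule lborel.nn_integral_fst[symmetric]) (use fm2 Am in measurable)
  also have "\<dots> \<le> (\<integral>\<^sup>+t. ennreal (1 + a powr (- B)) * indicator {s<..s+h} t \<partial>lborel)"
  proof (rule nn_integral_mono)
    fix t :: real
    show "(\<integral>\<^sup>+x. f (t, x) * indicator ?A (t, x) \<partial>lborel) \<le> ennreal (1 + a powr (- B)) * indicator {s<..s+h} t"
    proof (cases "t \<in> {s<..s+h} \<and> 0 \<le> t")
      case False
      have "(\<integral>\<^sup>+x. f (t, x) * indicator ?A (t, x) \<partial>lborel) = (\<integral>\<^sup>+x. 0 \<partial>(lborel::real measure))"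
        by (intro nn_integral_cong) (use False in \<open>auto simp: f_def indicator_def\<close>)
      then show ?thesis by simp
    next
      case True
      have "(\<integral>\<^sup>+x. f (t, x) * indicator ?A (t, x) \<partial>lborel)
          \<le> (\<integral>\<^sup>+x. ennreal (\<beta> t * x powr (- \<beta> t - 1)) * indicator {a..} x \<partial>lborel)"
        by (rule nn_integral_mono) (use True a in \<open>auto simp: f_def indicator_def\<close>)
      also have "\<dots> = ennreal (a powr (- \<beta> t))"
        by (rule inner_int) (use True pos a in auto)
      also have "\<dots> \<le> ennreal (1 + a powr (- B))"
      proof (rule ennreal_leI)
        show "a powr (- \<beta> t) \<le> 1 + a powr (- B)"
        proof (cases "a \<le> 1")
          case True
          have "a powr (- \<beta> t) \<le> a powr (- B)"
            using le[of t] \<open>t \<in> {s<..s+h} \<and> 0 \<le> t\<close> a True by (intro powr_mono') auto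
          then show ?thesis by simp
        next
          case False
          have "a powr (- \<beta> t) \<le> a powr 0"
            using pos[of t] \<open>t \<in> {s<..s+h} \<and> 0 \<le> t\<close> False by (intro powr_mono) auto
          then have "a powr (- \<beta> t) \<le> 1" using a by simp
          then show ?thesis by (simp add: add_increasing2)
        qed
      qed
      finally show ?thesis using True by simp
    qed
  qed
  also have "\<dots> = ennreal (1 + a powr (- B)) * ennreal h"
    using h by (simp add: nn_integral_cmult_indicator)
  also have "\<dots> = ennreal (h * (1 + a powr (- B)))"
    using h by (simp add: ennreal_mult' mult.commute)
  finally show ?thesis .
qed

lemma poisson_tail_ineq:
  fixes l :: real and j :: nat
  assumes l: "0 \<le> l"
  shows "1 - (\<Sum>k<Suc j. l ^ k / fact k * exp (- l)) \<le> l / real (Suc j)"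
proof -
  define a where "a n = l ^ n / fact n" for n
  have a_nn: "0 \<le> a n" for n using l by (simp add: a_def)
  have S: "a sums exp l" proof -
    have "a = (\<lambda>n. l^n /\<^sub>R fact n)" by (simp add: a_def fun_eq_iff field_simps)
    then show ?thesis using exp_converges[of l] by simp
  qed
  have t1: "(\<lambda>n. a (n + Suc j)) sums (exp l - (\<Sum>k<Suc j. a k))"
    by (rule sums_split_initial_segment[OF S])
  have t2: "(\<lambda>n. (l / real (Suc j)) * a (n + j)) sums ((l / real (Suc j)) * (exp l - (\<Sum>k<j. a k)))"
    by (rule sums_mult[OF sums_split_initial_segment[OF S]])
  have le: "a (n + Suc j) \<le> (l / real (Suc j)) * a (n + j)" for n
  proof -
    have "a (n + Suc j) = (l / real (Suc (n + j))) * a (n + j)"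
      by (simp add: a_def field_simps)
    also have "\<dots> \<le> (l / real (Suc j)) * a (n + j)"
      using l a_nn[of "n+j"] by (intro mult_right_mono divide_left_mono) auto
    finally show ?thesis .
  qed
  have "exp l - (\<Sum>k<Suc j. a k) \<le> (l / real (Suc j)) * (exp l - (\<Sum>k<j. a k))"
    using sums_le[OF le t1 t2] .
  also have "\<dots> \<le> (l / real (Suc j)) * exp l"
    using l a_nn by (intro mult_left_mono) (auto intro: sum_nonneg)
  finally have "exp l - (\<Sum>k<Suc j. a k) \<le> (l / real (Suc j)) * exp l" .
  then have "exp (- l) * (exp l - (\<Sum>k<Suc j. a k)) \<le> exp (- l) * ((l / real (Suc j)) * exp l)"
    by (intro mult_left_mono) auto
  then show ?thesis
    by (simp add: a_def sum_distrib_left sum_distrib_right right_diff_distrib exp_minus field_simps)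
qed

lemma pp_tail:
  assumes pp: "poisson_point_process M \<nu> P" and A: "A \<in> sets borel" and fin: "emeasure \<nu> A < \<infinity>"
  shows "{\<omega>\<in>space M. infinite (P \<omega> \<inter> A) \<or> Suc j \<le> point_count P A \<omega>} \<in> sets M"
    and "measure M {\<omega>\<in>space M. infinite (P \<omega> \<inter> A) \<or> Suc j \<le> point_count P A \<omega>} \<le> measure \<nu> A / real (Suc j)"
proof -
  interpret prob_space M using pp by (simp add: poisson_point_process_def)
  have pcm: "point_count P A \<in> measurable M (count_space UNIV)"
    and finm: "{\<omega>\<in>space M. finite (P \<omega> \<inter> A)} \<in> sets M"
    and prob: "\<And>k. measure M {\<omega>\<in>space M. finite (P \<omega> \<inter> A) \<and> point_count P A \<omega> = k}
                  = measure \<nu> A ^ k / fact k * exp (- measure \<nu> A)"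
    using pp A fin unfolding poisson_point_process_def by blast+
  define E where "E k = {\<omega>\<in>space M. finite (P \<omega> \<inter> A) \<and> point_count P A \<omega> = k}" for k
  have Em: "E k \<in> sets M" for k
  proof -
    have "point_count P A -` {k} \<inter> space M \<in> sets M"
      by (rule measurable_sets[OF pcm]) simp
    then have "{\<omega>\<in>space M. point_count P A \<omega> = k} \<in> sets M"
      by (simp add: vimage_def Int_def conj_commute)
    from sets.Int[OF finm this] show ?thesis
      unfolding E_def by (simp add: Int_def conj_commute) (metis (no_types, lifting) Collect_cong)
  qed
  have eq: "{\<omega>\<in>space M. infinite (P \<omega> \<inter> A) \<or> Suc j \<le> point_count P A \<omega>} = space M - (\<Union>k\<in>{..<Suc j}. E k)"
    by (auto simp: E_def)
  have Um: "(\<Union>k\<in>{..<Suc j}. E k) \<in> sets M" using Em by auto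
  show "{\<omega>\<in>space M. infinite (P \<omega> \<inter> A) \<or> Suc j \<le> point_count P A \<omega>} \<in> sets M"
    unfolding eq using Um by auto
  have "measure M {\<omega>\<in>space M. infinite (P \<omega> \<inter> A) \<or> Suc j \<le> point_count P A \<omega>}
      = 1 - measure M (\<Union>k\<in>{..<Suc j}. E k)"
    unfolding eq by (rule prob_compl[OF Um])
  also have "measure M (\<Union>k\<in>{..<Suc j}. E k) = (\<Sum>k<Suc j. measure M (E k))"
    by (rule finite_measure_finite_Union) (use Em in \<open>auto simp: disjoint_family_on_def E_def\<close>)
  also have "\<dots> = (\<Sum>k<Suc j. measure \<nu> A ^ k / fact k * exp (- measure \<nu> A))"
    using prob by (simp add: E_def)
  finally show "measure M {\<omega>\<in>space M. infinite (P \<omega> \<inter> A) \<or> Suc j \<le> point_count P A \<omega>} \<le> measure \<nu> A / real (Suc j)"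
    using poisson_tail_ineq[of "measure \<nu> A" j] by simp
qed

lemma shell_exists:
  fixes x \<epsilon> :: real
  assumes "0 < x" "x \<le> \<epsilon>"
  shows "\<exists>k. \<epsilon> / 2 ^ Suc k < x \<and> x \<le> \<epsilon> / 2 ^ k"
proof -
  obtain n where n: "\<epsilon> / x < 2 ^ n" using real_arch_pow[of 2 "\<epsilon> / x"] by auto
  have Pn: "\<epsilon> / 2 ^ n < x" using n assms by (simp add: field_simps)
  have "\<not> (\<epsilon> / 2 ^ 0 < x)" using assms by simp
  from exists_least_lemma[where P="\<lambda>n. \<epsilon> / 2 ^ n < x", OF this] Pn
  obtain k where "\<not> \<epsilon> / 2 ^ k < x" "\<epsilon> / 2 ^ Suc k < x" by blast
  then show ?thesis by (intro exI[of _ k]) auto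
qed

lemma comb_bound:
  fixes \<epsilon> r :: real and F :: "(real \<times> real) set"
  assumes eps: "0 < \<epsilon>" and r: "0 < r" "r < 1"
    and finF: "finite F"
    and pos: "\<And>p. p \<in> F \<Longrightarrow> 0 < snd p \<and> snd p \<le> \<epsilon>"
    and shells: "\<And>k. finite {p\<in>F. \<epsilon> / 2 ^ Suc k < snd p \<and> snd p \<le> \<epsilon> / 2 ^ k} \<and>
                   real (card {p\<in>F. \<epsilon> / 2 ^ Suc k < snd p \<and> snd p \<le> \<epsilon> / 2 ^ k}) \<le> (1 - r) * (2 * r) ^ k"
  shows "(\<Sum>p\<in>F. snd p) \<le> \<epsilon>"
proof -
  define \<kappa> where "\<kappa> (p::real\<times>real) = (SOME k. \<epsilon> / 2 ^ Suc k < snd p \<and> snd p \<le> \<epsilon> / 2 ^ k)" for p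
  have \<kappa>: "\<epsilon> / 2 ^ Suc (\<kappa> p) < snd p \<and> snd p \<le> \<epsilon> / 2 ^ (\<kappa> p)" if "p \<in> F" for p
    unfolding \<kappa>_def by (rule someI_ex) (use pos[OF that] shell_exists in auto)
  have "(\<Sum>p\<in>F. snd p) \<le> (\<Sum>p\<in>F. \<epsilon> / 2 ^ \<kappa> p)"
    using \<kappa> by (intro sum_mono) auto
  also have "\<dots> = (\<Sum>k\<in>\<kappa> ` F. (\<Sum>p\<in>{p\<in>F. \<kappa> p = k}. \<epsilon> / 2 ^ \<kappa> p))"
    by (rule sum.image_gen[OF finF])
  also have "\<dots> = (\<Sum>k\<in>\<kappa> ` F. real (card {p\<in>F. \<kappa> p = k}) * (\<epsilon> / 2 ^ k))"
    by (intro sum.cong) auto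
  also have "\<dots> \<le> (\<Sum>k\<in>\<kappa> ` F. ((1 - r) * (2 * r) ^ k) * (\<epsilon> / 2 ^ k))"
  proof (intro sum_mono mult_right_mono)
    fix k assume "k \<in> \<kappa> ` F"
    have sub: "{p\<in>F. \<kappa> p = k} \<subseteq> {p\<in>F. \<epsilon> / 2 ^ Suc k < snd p \<and> snd p \<le> \<epsilon> / 2 ^ k}"
      using \<kappa> by auto
    have "card {p\<in>F. \<kappa> p = k} \<le> card {p\<in>F. \<epsilon> / 2 ^ Suc k < snd p \<and> snd p \<le> \<epsilon> / 2 ^ k}"
      by (rule card_mono[OF _ sub]) (use shells in auto)
    then show "real (card {p\<in>F. \<kappa> p = k}) \<le> (1 - r) * (2 * r) ^ k"
      using shells[of k] by linarith
    show "0 \<le> \<epsilon> / 2 ^ k" using eps by simp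
  qed
  also have "\<dots> = \<epsilon> * (1 - r) * (\<Sum>k\<in>\<kappa> ` F. r ^ k)"
  proof -
    have "((1 - r) * (2 * r) ^ k) * (\<epsilon> / 2 ^ k) = \<epsilon> * (1 - r) * r ^ k" for k :: nat
      by (simp add: power_mult_distrib)
    then show ?thesis by (simp add: sum_distrib_left mult_ac)
  qed
  also have "\<dots> \<le> \<epsilon> * (1 - r) * (\<Sum>k. r ^ k)"
    using eps r by (intro mult_left_mono sum_le_suminf) (auto intro: summable_geometric finite_imageI finF)
  also have "\<dots> = \<epsilon>"
    using r by (simp add: suminf_geometric)
  finally show ?thesis .
qed

lemma D_event:
  fixes P :: "'w \<Rightarrow> (real \<times> real) set"
  assumes pos: "\<forall>p\<in>P \<omega>. 0 < snd p" and ab: "a \<le> b" and eps: "0 < \<epsilon>"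
    and big: "\<epsilon> < \<bar>multistable_subordinator P b \<omega> - multistable_subordinator P a \<omega>\<bar>"
  shows "\<exists>F. finite F \<and> F \<subseteq> {p\<in>P \<omega>. a < fst p \<and> fst p \<le> b} \<and> \<epsilon> < (\<Sum>p\<in>F. snd p)"
proof -
  define X where "X = {p\<in>P \<omega>. fst p \<le> a}"
  define Y where "Y = {p\<in>P \<omega>. a < fst p \<and> fst p \<le> b}"
  have Z: "{p\<in>P \<omega>. fst p \<le> b} = X \<union> Y" and XY: "X \<inter> Y = {}"
    using ab by (auto simp: X_def Y_def)
  have Da: "multistable_subordinator P a \<omega> = infsum snd X"
    by (simp add: multistable_subordinator_def X_def)
  have Db: "multistable_subordinator P b \<omega> = infsum snd (X \<union> Y)"
    by (simp add: multistable_subordinator_def Z)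
  have Ypos: "\<And>p. p \<in> Y \<Longrightarrow> 0 \<le> snd p" using pos by (auto simp: Y_def less_imp_le)
  show ?thesis
  proof (cases "snd summable_on Y")
    case False
    have "\<not> bdd_above (sum snd ` {F. F \<subseteq> Y \<and> finite F})"
      using False nonneg_bdd_above_summable_on[of Y snd] Ypos by blast
    then obtain F where "F \<subseteq> Y" "finite F" "\<not> sum snd F \<le> \<epsilon>"
      unfolding bdd_above_def by blast
    then show ?thesis unfolding Y_def[symmetric] by (intro exI[of _ F]) auto
  next
    case Ysum: True
    show ?thesis
    proof (cases "snd summable_on X")
      case False
      then have "\<not> snd summable_on (X \<union> Y)"
        using summable_on_subset_banach[of snd "X \<union> Y" X] by blast
      then have "multistable_subordinator P b \<omega> = 0" "multistable_subordinator P a \<omega> = 0"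
        using False Da Db by (simp_all add: infsum_not_exists)
      then show ?thesis using big eps by simp
    next
      case Xsum: True
      have "multistable_subordinator P b \<omega> - multistable_subordinator P a \<omega> = infsum snd Y"
        using Da Db infsum_Un_disjoint[OF Xsum Ysum XY] by simp
      moreover have "0 \<le> infsum snd Y" using Ypos by (rule infsum_nonneg)
      ultimately have "\<epsilon> < infsum snd Y" using big by simp
      moreover have "(sum snd \<longlongrightarrow> infsum snd Y) (finite_subsets_at_top Y)"
        using has_sum_infsum[OF Ysum] unfolding has_sum_def .
      ultimately have "eventually (\<lambda>F. \<epsilon> < sum snd F) (finite_subsets_at_top Y)"
        by (rule order_tendstoD(1)[rotated])
      then obtain F where "finite F" "F \<subseteq> Y" "\<epsilon> < sum snd F"
        unfolding eventually_finite_subsets_at_top by blast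
      then show ?thesis unfolding Y_def[symmetric] by blast
    qed
  qed
qed

lemma two_pow_powr: "((2::real) ^ n) powr B = (2 powr B) ^ n"
proof -
  have "((2::real) ^ n) powr B = (2 powr real n) powr B" by (simp add: powr_realpow)
  also have "\<dots> = 2 powr (real n * B)" by (simp add: powr_powr)
  also have "\<dots> = (2 powr B) ^ n" by (simp add: powr_power)
  finally show ?thesis .
qed

lemma consts_facts:
  fixes B :: real
  assumes "0 < B" "B < 1"
  defines "z \<equiv> 2 powr B"
  defines "q \<equiv> (z + 2) / 2"
  shows "1 < z" "z < 2" "1 < q" "z < q" "q < 2"
proof -
  have "2 powr 0 < (2::real) powr B" using assms by (intro powr_less_mono) auto
  then show "1 < z" by (simp add: z_def)
  have "(2::real) powr B < 2 powr 1" using assms by (intro powr_less_mono) auto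
  then show "z < 2" by (simp add: z_def)
  then show "1 < q" "z < q" "q < 2" using \<open>1 < z\<close> by (auto simp: q_def)
qed

lemma c_summable:
  fixes B \<epsilon> :: real
  assumes B: "0 < B" "B < 1" and eps: "0 < \<epsilon>"
  defines "z \<equiv> 2 powr B"
  defines "q \<equiv> (z + 2) / 2"
  defines "r \<equiv> q / 2"
  shows "summable (\<lambda>k. (1 + (\<epsilon> / 2 ^ Suc k) powr (- B)) / ((1 - r) * q ^ k))"
proof -
  note cf = consts_facts[OF B, folded z_def, folded q_def]
  have eq: "(1 + (\<epsilon> / 2 ^ Suc k) powr (- B)) / ((1 - r) * q ^ k)
      = (1 / (1 - r)) * ((1 / q) ^ k + (\<epsilon> powr (- B) * z) * (z / q) ^ k)" for k
  proof -
    have "(\<epsilon> / 2 ^ Suc k) powr (- B) = \<epsilon> powr (- B) * ((2 ^ Suc k) powr B)"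
      by (simp add: powr_divide powr_minus_divide)
    also have "\<dots> = \<epsilon> powr (- B) * z * z ^ k"
      using two_pow_powr[of "Suc k" B] by (simp add: z_def)
    finally have e1: "(\<epsilon> / 2 ^ Suc k) powr (- B) = (\<epsilon> powr (- B) * z) * z ^ k" .
    have r1: "1 - r \<noteq> 0" "q \<noteq> 0" using cf by (auto simp: r_def)
    have "(1 + (\<epsilon> / 2 ^ Suc k) powr (- B)) / ((1 - r) * q ^ k)
        = (1 / (1 - r)) * ((1 + (\<epsilon> powr (- B) * z) * z ^ k) / q ^ k)"
      unfolding e1 using r1 by simp
    also have "\<dots> = (1 / (1 - r)) * ((1 / q) ^ k + (\<epsilon> powr (- B) * z) * (z / q) ^ k)"
      by (simp add: add_divide_distrib power_divide)
    finally show ?thesis .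
  qed
  have "summable (\<lambda>k. (1 / (1 - r)) * ((1 / q) ^ k + (\<epsilon> powr (- B) * z) * (z / q) ^ k))"
  proof -
    have g1: "summable (\<lambda>k. (1 / q) ^ k)" by (rule summable_geometric) (use cf in simp)
    have g2: "summable (\<lambda>k. (z / q) ^ k)" by (rule summable_geometric) (use cf in simp)
    show ?thesis by (intro summable_mult summable_add g1 g2)
  qed
  then show ?thesis unfolding eq .
qed

lemma meas_le:
  assumes "emeasure N A \<le> ennreal x" "0 \<le> x"
  shows "measure N A \<le> x"
  unfolding measure_def using assms by (rule enn2real_leI[rotated])

lemma nu_N0:
  fixes \<beta> :: "real \<Rightarrow> real"
  assumes cont: "continuous_on {0..} \<beta>"
  shows "emeasure (multistable_intensity \<beta>) (({..<0} \<times> UNIV) \<union> (UNIV \<times> {..0})) = 0"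
proof -
  define f where "f = (\<lambda>(t, x). if 0 \<le> t \<and> 0 < x then ennreal (\<beta> t * x powr (- \<beta> t - 1)) else 0)"
  have fm: "f \<in> borel_measurable borel" unfolding f_def by (rule nu_meas[OF cont])
  let ?A = "(({..<0::real} \<times> (UNIV::real set)) \<union> (UNIV \<times> {..0}))"
  have Am: "?A \<in> sets borel" by (intro sets.Un Times_borel) auto
  have "emeasure (multistable_intensity \<beta>) ?A = (\<integral>\<^sup>+p. f p * indicator ?A p \<partial>lborel)"
    unfolding multistable_intensity_def f_def[symmetric]
    by (rule emeasure_density) (use fm Am in auto)
  also have "\<dots> = (\<integral>\<^sup>+p. 0 \<partial>(lborel :: (real \<times> real) measure))"
    by (intro nn_integral_cong) (auto simp: f_def indicator_def)
  finally show ?thesis by simp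
qed

lemma main_bound:
  fixes \<beta> :: "real \<Rightarrow> real" and M :: "'w measure" and P :: "'w \<Rightarrow> (real \<times> real) set"
  assumes cont: "continuous_on {0..} \<beta>"
    and pos: "\<And>t. 0 \<le> t \<Longrightarrow> 0 < \<beta> t"
    and leB: "\<And>t. 0 \<le> t \<Longrightarrow> \<beta> t \<le> B" and B: "0 < B" "B < 1"
    and pp: "poisson_point_process M (multistable_intensity \<beta>) P"
    and eps: "0 < \<epsilon>"
  shows "\<exists>C>0. \<forall>a b S. a \<le> b \<longrightarrow> S \<subseteq> {\<omega>\<in>space M.
            \<epsilon> < \<bar>multistable_subordinator P b \<omega> - multistable_subordinator P a \<omega>\<bar>} \<longrightarrow> measure M S \<le> C * (b - a)"
proof -
  interpret prob_space M using pp by (simp add: poisson_point_process_def)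
  define z where "z = 2 powr B"
  define q where "q = (z + 2) / 2"
  define r where "r = q / 2"
  note cf = consts_facts[OF B, folded z_def, folded q_def]
  have r: "0 < r" "r < 1" "2 * r = q" using cf by (auto simp: r_def)
  define c where "c k = (1 + (\<epsilon> / 2 ^ Suc k) powr (- B)) / ((1 - r) * q ^ k)" for k
  have csum: "summable c"
    using c_summable[OF B eps] unfolding c_def z_def q_def r_def .
  have c_nn: "0 \<le> c k" for k using r cf by (simp add: c_def)
  define C where "C = 1 + \<epsilon> powr (- B) + suminf c"
  have Cpos: "0 < C" unfolding C_def using suminf_nonneg[OF csum c_nn]
    by (simp add: add_pos_nonneg)
  show ?thesis
  proof (intro exI[of _ C] conjI allI impI Cpos)
    fix a b :: real and S assume ab: "a \<le> b"
      and Ssub: "S \<subseteq> {\<omega>\<in>space M. \<epsilon> < \<bar>multistable_subordinator P b \<omega> - multistable_subordinator P a \<omega>\<bar>}"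
    define h where "h = b - a"
    have h: "0 \<le> h" "b = a + h" using ab by (auto simp: h_def)
    let ?\<nu> = "multistable_intensity \<beta>"
    have sets_nu: "sets ?\<nu> = sets borel"
      by (simp add: multistable_intensity_def)
    define N0 where "N0 = (({..<0::real} \<times> (UNIV::real set)) \<union> (UNIV \<times> {..0}))"
    define Big where "Big = {a<..a+h} \<times> {\<epsilon><..}"
    define Sh where "Sh k = {a<..a+h} \<times> {\<epsilon> / 2 ^ Suc k<..\<epsilon> / 2 ^ k}" for k :: nat
    define m where "m k = nat \<lfloor>(1 - r) * q ^ k\<rfloor>" for k :: nat
    define Ev where "Ev A j = {\<omega>\<in>space M. infinite (P \<omega> \<inter> A) \<or> Suc j \<le> point_count P A \<omega>}"
      for A and j :: nat
    have N0b: "N0 \<in> sets borel" unfolding N0_def by (intro sets.Un Times_borel) auto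
    have Bigb: "Big \<in> sets borel" unfolding Big_def by (intro Times_borel) auto
    have Shb: "Sh k \<in> sets borel" for k unfolding Sh_def by (intro Times_borel) auto
    have eN0: "emeasure ?\<nu> N0 = 0" unfolding N0_def by (rule nu_N0[OF cont])
    have eBig: "emeasure ?\<nu> Big \<le> ennreal (h * (1 + \<epsilon> powr (- B)))"
      unfolding Big_def by (rule nu_strip[OF cont pos leB eps h(1)])
    have eSh: "emeasure ?\<nu> (Sh k) \<le> ennreal (h * (1 + (\<epsilon> / 2 ^ Suc k) powr (- B)))" for k
    proof -
      have "emeasure ?\<nu> (Sh k) \<le> emeasure ?\<nu> ({a<..a+h} \<times> {\<epsilon> / 2 ^ Suc k<..})"
        by (rule emeasure_mono) (auto simp: Sh_def sets_nu intro!: Times_borel)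
      also have "\<dots> \<le> ennreal (h * (1 + (\<epsilon> / 2 ^ Suc k) powr (- B)))"
        by (rule nu_strip[OF cont pos leB _ h(1)]) (use eps in auto)
      finally show ?thesis .
    qed
    have fN0: "emeasure ?\<nu> N0 < \<infinity>" using eN0 by simp
    have fBig: "emeasure ?\<nu> Big < \<infinity>" using eBig by (rule le_less_trans) simp
    have fSh: "emeasure ?\<nu> (Sh k) < \<infinity>" for k using eSh[of k] by (rule le_less_trans) simp
    note tN0 = pp_tail[OF pp N0b fN0, of 0, folded Ev_def]
    note tBig = pp_tail[OF pp Bigb fBig, of 0, folded Ev_def]
    have tSh: "Ev (Sh k) (m k) \<in> sets M" "measure M (Ev (Sh k) (m k)) \<le> measure ?\<nu> (Sh k) / real (Suc (m k))" for k
      using pp_tail[OF pp Shb fSh, of k "m k"] unfolding Ev_def by auto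
    define Bad where "Bad = Ev N0 0 \<union> Ev Big 0 \<union> (\<Union>k. Ev (Sh k) (m k))"
    have Ubm: "(\<Union>k. Ev (Sh k) (m k)) \<in> sets M" using tSh(1) by auto
    have Badm: "Bad \<in> sets M" unfolding Bad_def using tN0(1) tBig(1) Ubm by auto
    have sub: "{\<omega>\<in>space M. \<epsilon> < \<bar>multistable_subordinator P b \<omega> - multistable_subordinator P a \<omega>\<bar>} \<subseteq> Bad"
    proof (rule subsetI, rule ccontr)
      fix \<omega> assume w: "\<omega> \<in> {\<omega>\<in>space M. \<epsilon> < \<bar>multistable_subordinator P b \<omega> - multistable_subordinator P a \<omega>\<bar>}"
        and nb: "\<omega> \<notin> Bad"
      have sp: "\<omega> \<in> space M" using w by simp
      have "finite (P \<omega> \<inter> N0) \<and> \<not> Suc 0 \<le> card (P \<omega> \<inter> N0)"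
        using nb sp unfolding Bad_def Ev_def point_count_def by blast
      then have n1: "P \<omega> \<inter> N0 = {}" by (metis Suc_leI card_gt_0_iff)
      have posw: "\<forall>p\<in>P \<omega>. 0 < snd p"
      proof
        fix p assume "p \<in> P \<omega>"
        then show "0 < snd p" using n1 by (cases p) (auto simp: N0_def not_less)
      qed
      obtain F where F: "finite F" "F \<subseteq> {p\<in>P \<omega>. a < fst p \<and> fst p \<le> b}" "\<epsilon> < (\<Sum>p\<in>F. snd p)"
        using D_event[of P \<omega> a b \<epsilon>, OF posw ab eps] w by auto
      have "finite (P \<omega> \<inter> Big) \<and> \<not> Suc 0 \<le> card (P \<omega> \<inter> Big)"
        using nb sp unfolding Bad_def Ev_def point_count_def by blast
      then have n2: "P \<omega> \<inter> Big = {}" by (metis Suc_leI card_gt_0_iff)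
      have n3: "finite (P \<omega> \<inter> Sh k) \<and> card (P \<omega> \<inter> Sh k) \<le> m k" for k
      proof -
        have "finite (P \<omega> \<inter> Sh k) \<and> \<not> Suc (m k) \<le> card (P \<omega> \<inter> Sh k)"
          using nb sp unfolding Bad_def Ev_def point_count_def by blast
        then show ?thesis by linarith
      qed
      have "(\<Sum>p\<in>F. snd p) \<le> \<epsilon>"
      proof (rule comb_bound[OF eps r(1,2) F(1)])
        fix p assume pF: "p \<in> F"
        then have "p \<in> P \<omega>" "a < fst p" "fst p \<le> a + h" using F(2) h by auto
        then have "\<not> \<epsilon> < snd p" using n2 by (cases p) (auto simp: Big_def)
        then show "0 < snd p \<and> snd p \<le> \<epsilon>" using posw \<open>p \<in> P \<omega>\<close> by auto
      next
        fix k
        have s: "{p\<in>F. \<epsilon> / 2 ^ Suc k < snd p \<and> snd p \<le> \<epsilon> / 2 ^ k} \<subseteq> P \<omega> \<inter> Sh k"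
          using F(2) h by (auto simp: Sh_def mem_Times_iff)
        have fin: "finite {p\<in>F. \<epsilon> / 2 ^ Suc k < snd p \<and> snd p \<le> \<epsilon> / 2 ^ k}"
          using F(1) by auto
        have "card {p\<in>F. \<epsilon> / 2 ^ Suc k < snd p \<and> snd p \<le> \<epsilon> / 2 ^ k} \<le> m k"
          using card_mono[OF _ s] n3[of k] by (meson order_trans)
        then have "real (card {p\<in>F. \<epsilon> / 2 ^ Suc k < snd p \<and> snd p \<le> \<epsilon> / 2 ^ k}) \<le> real (m k)"
          by simp
        also have "\<dots> \<le> (1 - r) * q ^ k"
          unfolding m_def using r cf by (intro of_nat_floor) simp
        finally show "finite {p\<in>F. \<epsilon> / 2 ^ Suc k < snd p \<and> snd p \<le> \<epsilon> / 2 ^ k} \<and>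
                   real (card {p\<in>F. \<epsilon> / 2 ^ Suc k < snd p \<and> snd p \<le> \<epsilon> / 2 ^ k}) \<le> (1 - r) * (2 * r) ^ k"
          using fin r(3) by simp
      qed
      then show False using F(3) by simp
    qed
    have mSh: "measure M (Ev (Sh k) (m k)) \<le> h * c k" for k
    proof -
      have "measure M (Ev (Sh k) (m k)) \<le> measure ?\<nu> (Sh k) / real (Suc (m k))" by (rule tSh(2))
      also have "\<dots> \<le> h * (1 + (\<epsilon> / 2 ^ Suc k) powr (- B)) / real (Suc (m k))"
        by (intro divide_right_mono meas_le eSh) (use h in auto)
      also have "\<dots> \<le> h * (1 + (\<epsilon> / 2 ^ Suc k) powr (- B)) / ((1 - r) * q ^ k)"
      proof (rule divide_left_mono)
        have "(1 - r) * q ^ k < real_of_int \<lfloor>(1 - r) * q ^ k\<rfloor> + 1" by linarith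
        also have "\<dots> = real (Suc (m k))"
          unfolding m_def using r cf by simp
        finally show "(1 - r) * q ^ k \<le> real (Suc (m k))" by simp
        show "0 \<le> h * (1 + (\<epsilon> / 2 ^ Suc k) powr (- B))" using h by simp
        show "0 < real (Suc (m k)) * ((1 - r) * q ^ k)" using r cf by simp
      qed
      also have "\<dots> = h * c k" by (simp add: c_def)
      finally show ?thesis .
    qed
    have msum: "summable (\<lambda>k. measure M (Ev (Sh k) (m k)))"
      by (rule summable_comparison_test'[OF summable_mult[OF csum, of h], of 0]) (use mSh in simp)
    have "measure M (\<Union>k. Ev (Sh k) (m k)) \<le> (\<Sum>k. measure M (Ev (Sh k) (m k)))"
      by (rule finite_measure_subadditive_countably) (use tSh(1) msum in auto)
    also have "\<dots> \<le> (\<Sum>k. h * c k)"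
      by (rule suminf_le[OF mSh msum summable_mult[OF csum]])
    also have "\<dots> = h * suminf c" by (rule suminf_mult[OF csum])
    finally have mU: "measure M (\<Union>k. Ev (Sh k) (m k)) \<le> h * suminf c" .
    have m1: "measure M (Ev N0 0) \<le> 0"
      using tN0(2) meas_le[of ?\<nu> N0 0] eN0 by simp
    have m2: "measure M (Ev Big 0) \<le> h * (1 + \<epsilon> powr (- B))"
      using tBig(2) meas_le[OF eBig] h by simp
    have "measure M S \<le> measure M Bad"
      by (rule finite_measure_mono[OF subset_trans[OF Ssub sub] Badm])
    also have "\<dots> \<le> measure M (Ev N0 0 \<union> Ev Big 0) + measure M (\<Union>k. Ev (Sh k) (m k))"
      unfolding Bad_def by (rule measure_Un_le) (use tN0(1) tBig(1) Ubm in auto)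
    also have "measure M (Ev N0 0 \<union> Ev Big 0) \<le> measure M (Ev N0 0) + measure M (Ev Big 0)"
      by (rule measure_Un_le) (use tN0(1) tBig(1) in auto)
    finally have "measure M S \<le> 0 + h * (1 + \<epsilon> powr (- B)) + h * suminf c"
      using m1 m2 mU by linarith
    also have "\<dots> = C * (b - a)" by (simp add: C_def h_def algebra_simps)
    finally show "measure M S \<le> C * (b - a)" .
  qed
qed

theorem mainTheorem1:
  fixes \<beta> :: "real \<Rightarrow> real" and M :: "'w measure" and P :: "'w \<Rightarrow> (real \<times> real) set"
  assumes "continuous_on {0..} \<beta>"
    and "\<forall>t\<ge>0. 0 < \<beta> t \<and> \<beta> t < 1"
    and "(SUP t\<in>{0..}. \<beta> t) < 1"
    and "poisson_point_process M (multistable_intensity \<beta>) P"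
  defines "D \<equiv> multistable_subordinator P"
  shows "(\<forall>t\<ge>0. \<forall>\<epsilon>>0.
            ((\<lambda>s. measure M {\<omega>\<in>space M. \<bar>D s \<omega> - D t \<omega>\<bar> > \<epsilon>}) \<longlongrightarrow> 0)
              (at t within {0..}))
       \<and> (\<forall>\<epsilon>>0. \<exists>C>0. \<forall>t\<ge>0. \<forall>h\<ge>0.
            measure M {\<omega>\<in>space M. D (t + h) \<omega> - D t \<omega> > \<epsilon>} \<le> C * h)"
proof -
  note cont = assms(1) and pp = assms(4)
  define B where "B = (SUP t\<in>{0..}. \<beta> t)"
  have bdd: "bdd_above (\<beta> ` {0..})"
    using assms(2) by (intro bdd_aboveI[of _ 1]) (auto intro: less_imp_le)
  have leB: "\<And>t. 0 \<le> t \<Longrightarrow> \<beta> t \<le> B"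
    unfolding B_def by (rule cSUP_upper[OF _ bdd]) auto
  have pos: "\<And>t. 0 \<le> t \<Longrightarrow> 0 < \<beta> t" using assms(2) by auto
  have B: "0 < B" "B < 1"
    using pos[of 0] leB[of 0] assms(3) by (auto simp: B_def)
  have key: "\<exists>C>0. \<forall>a b S. a \<le> b \<longrightarrow> S \<subseteq> {\<omega>\<in>space M. \<epsilon> < \<bar>D b \<omega> - D a \<omega>\<bar>} \<longrightarrow> measure M S \<le> C * (b - a)"
    if "0 < \<epsilon>" for \<epsilon>
    unfolding D_def by (rule main_bound[OF cont _ _ B pp that]) (auto intro: pos leB)
  show ?thesis
  proof (intro conjI allI impI)
    fix t \<epsilon> :: real assume t: "0 \<le> t" and eps: "0 < \<epsilon>"
    obtain C where C: "0 < C" "\<And>a b S. a \<le> b \<Longrightarrow> S \<subseteq> {\<omega>\<in>space M. \<epsilon> < \<bar>D b \<omega> - D a \<omega>\<bar>} \<Longrightarrow> measure M S \<le> C * (b - a)"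
      using key[OF eps] by blast
    have bnd: "measure M {\<omega>\<in>space M. \<bar>D s \<omega> - D t \<omega>\<bar> > \<epsilon>} \<le> C * \<bar>s - t\<bar>" for s
    proof (cases "t \<le> s")
      case True
      then show ?thesis using C(2)[OF True, of "{\<omega>\<in>space M. \<bar>D s \<omega> - D t \<omega>\<bar> > \<epsilon>}"] by simp
    next
      case False
      then have "s \<le> t" by simp
      from C(2)[OF this, of "{\<omega>\<in>space M. \<bar>D s \<omega> - D t \<omega>\<bar> > \<epsilon>}"] False
      show ?thesis by (auto simp: abs_minus_commute)
    qed
    have lim: "((\<lambda>s. C * \<bar>s - t\<bar>) \<longlongrightarrow> C * \<bar>t - t\<bar>) (at t within {0..})"
      by (intro tendsto_intros)
    show "((\<lambda>s. measure M {\<omega>\<in>space M. \<bar>D s \<omega> - D t \<omega>\<bar> > \<epsilon>}) \<longlongrightarrow> 0) (at t within {0..})"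
    proof (rule tendsto_sandwich[of "\<lambda>s. 0" _ _ "\<lambda>s. C * \<bar>s - t\<bar>"])
      show "\<forall>\<^sub>F s in at t within {0..}. 0 \<le> measure M {\<omega>\<in>space M. \<bar>D s \<omega> - D t \<omega>\<bar> > \<epsilon>}"
        by simp
      show "\<forall>\<^sub>F s in at t within {0..}. measure M {\<omega>\<in>space M. \<bar>D s \<omega> - D t \<omega>\<bar> > \<epsilon>} \<le> C * \<bar>s - t\<bar>"
        using bnd by simp
      show "((\<lambda>s. 0) \<longlongrightarrow> (0::real)) (at t within {0..})" by simp
      show "((\<lambda>s. C * \<bar>s - t\<bar>) \<longlongrightarrow> 0) (at t within {0..})" using lim by simp
    qed
  next
    fix \<epsilon> :: real assume eps: "0 < \<epsilon>"
    obtain C where C: "0 < C" "\<And>a b S. a \<le> b \<Longrightarrow> S \<subseteq> {\<omega>\<in>space M. \<epsilon> < \<bar>D b \<omega> - D a \<omega>\<bar>} \<Longrightarrow> measure M S \<le> C * (b - a)"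
      using key[OF eps] by blast
    show "\<exists>C>0. \<forall>t\<ge>0. \<forall>h\<ge>0. measure M {\<omega>\<in>space M. D (t + h) \<omega> - D t \<omega> > \<epsilon>} \<le> C * h"
    proof (intro exI[of _ C] conjI allI impI C(1))
      fix t h :: real assume "0 \<le> t" "0 \<le> h"
      then have "t \<le> t + h" by simp
      have "{\<omega>\<in>space M. D (t + h) \<omega> - D t \<omega> > \<epsilon>} \<subseteq> {\<omega>\<in>space M. \<epsilon> < \<bar>D (t + h) \<omega> - D t \<omega>\<bar>}"
        by auto
      from C(2)[OF \<open>t \<le> t + h\<close> this]
      show "measure M {\<omega>\<in>space M. D (t + h) \<omega> - D t \<omega> > \<epsilon>} \<le> C * h" by simp
    qed
  qed
qed

end
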